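(* Let $m\ge2$, $K$ an algebraic number field, $a(z)\in K[z]$ monic of degree $m$, $b(z)\in K[z]$ of degree $\le m-1$ with $z^{m-1}$-coefficient $b_{m-1}$, with $a(z)=\prod_{i=1}^m(z-\alpha_i)$, $\alpha_i\in K$ pairwise distinct, $s_i:=b(\alpha_i)/a'(\alpha_i)\in\mathbb{Q}\setminus\mathbb{Z}_{\le-1}$, $b_{m-1}\notin\mathbb{Z}_{<-1}$. Let $v$ be a non-Archimedean place of $K$ and $n$ a positive integer. Then \[\log\max_{0\le\ell\le m}\{\|P_{n,\ell}\|_v\}\le\sum_{i=1}^m\bigl(\log|\mu_n(s_i)|_v^{-1}+n\,\mathrm{h}_v(\alpha_i)\bigr).\]
   Context: $P_{n,\ell}(z)=\frac1{n!}(\frac{d}{dz}+\frac{b(z)}{a(z)})^n(a(z)^nz^\ell)$ (operator applied $n$ times; a polynomial). For $R=\sum_kr_kz^k$, $\|R\|_v=\max_k|r_k|_v$. Absolute values normalized: $|p|_v=p^{-[K_v:\mathbb{Q}_p]/[K:\mathbb{Q}]}$ for $v\mid p$; $\mathrm{h}_v(\alpha)=\log\max\{1,|\alpha|_v\}$. For $s\in\mathbb{Q}$, $\mu_n(s)=\mathrm{den}(s)^n\prod_{q\text{ prime},\,q\mid\mathrm{den}(s)}q^{\lfloor n/(q-1)\rfloor}$. *)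

theory Defs
  imports "HOL-Computational_Algebra.Computational_Algebra" Complex_Main
begin

definition is_number_field :: "'a::field_char_0 itself \<Rightarrow> bool" where
  "is_number_field _ \<longleftrightarrow>
     (\<exists>B :: 'a list. \<forall>x :: 'a. \<exists>c :: nat \<Rightarrow> rat.
        x = (\<Sum>i<length B. of_rat (c i) * B ! i))"

text \<open>An absolute value representing a non-Archimedean place v of K, lying over
  the prime p, with |p|_v = p^(-c), 0 < c <= 1 (the normalized one has
  c = [K_v:Q_p]/[K:Q]).\<close>
definition nonarch_place_abs :: "('a::field_char_0 \<Rightarrow> real) \<Rightarrow> bool" where
  "nonarch_place_abs absv \<longleftrightarrow>
     (\<forall>x. 0 \<le> absv x) \<and> (\<forall>x. absv x = 0 \<longleftrightarrow> x = 0) \<and>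
     (\<forall>x y. absv (x * y) = absv x * absv y) \<and>
     (\<forall>x y. absv (x + y) \<le> max (absv x) (absv y)) \<and>
     (\<exists>(p::nat) (c::real). prime p \<and> 0 < c \<and> c \<le> 1 \<and>
        absv (of_nat p) = real p powr (- c))"

text \<open>Q_k = a^k * (d/dz + b/a)^k (a^n z^l), computed by the recurrence
  Q_(k+1) = a Q_k' + (b - k a') Q_k, Q_0 = a^n z^l.\<close>
fun Qop :: "'a::field_char_0 poly \<Rightarrow> 'a poly \<Rightarrow> 'a poly \<Rightarrow> nat \<Rightarrow> 'a poly" where
  "Qop a b F 0 = F"
| "Qop a b F (Suc k) =
     a * pderiv (Qop a b F k) + (b - smult (of_nat k) (pderiv a)) * Qop a b F k"

text \<open>P_{n,l}(z) = (1/n!) (d/dz + b/a)^n (a^n z^l).\<close>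
definition Ppoly :: "'a::field_char_0 poly \<Rightarrow> 'a poly \<Rightarrow> nat \<Rightarrow> nat \<Rightarrow> 'a poly" where
  "Ppoly a b n l = smult (1 / of_nat (fact n)) (Qop a b (a ^ n * monom 1 l) n div a ^ n)"

definition vnorm :: "('a::zero \<Rightarrow> real) \<Rightarrow> 'a poly \<Rightarrow> real" where
  "vnorm absv R = Max ((\<lambda>k. absv (coeff R k)) ` {0..degree R})"

definition den_rat :: "rat \<Rightarrow> nat" where
  "den_rat s = nat (snd (quotient_of s))"

definition mu :: "nat \<Rightarrow> rat \<Rightarrow> nat" where
  "mu n s = den_rat s ^ n * (\<Prod>q\<in>prime_factors (den_rat s). q ^ (n div (q - 1)))"

definition hv :: "('a \<Rightarrow> real) \<Rightarrow> 'a \<Rightarrow> real" where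
  "hv absv \<alpha> = ln (max 1 (absv \<alpha>))"

end

theory Submission
  imports Defs "HOL-Number_Theory.Cong"
begin

lemma legendre_rec:
  fixes p k :: nat assumes p: "prime p"
  shows "multiplicity p (fact k :: nat) = k div p + multiplicity p (fact (k div p) :: nat)"
proof (induction k)
  case 0 then show ?case by simp
next
  case (Suc k)
  have p1: "p > 1" using p prime_gt_1_nat by blast
  have m: "multiplicity p (fact (Suc k) :: nat) = multiplicity p (Suc k) + multiplicity p (fact k :: nat)"
  proof -
    have "(fact (Suc k) :: nat) = Suc k * fact k" by (simp only: fact_Suc of_nat_id)
    then show ?thesis using p by (simp only: prime_elem_multiplicity_mult_distrib prime_imp_prime_elem fact_nonzero Suc_neq_Zero not_False_eq_True)
  qed
  show ?case
  proof (cases "p dvd Suc k")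
    case True
    then obtain q where q: "Suc k = p * q" by blast
    have q0: "q > 0" using q by (cases q) auto
    have d1: "Suc k div p = q" using q p1 by simp
    have d2: "k div p = q - 1"
    proof -
      have "k = p * (q - 1) + (p - 1)" using q q0 p1
        by (cases q) (auto simp: algebra_simps)
      then show ?thesis using p1 by (intro div_nat_eqI) (auto simp: algebra_simps)
    qed
    have fq: "(fact q :: nat) = q * fact (q - 1)" using q0 fact_Suc[of "q - 1", where 'a=nat] by simp
    have mq: "multiplicity p (fact q :: nat) = multiplicity p q + multiplicity p (fact (q - 1) :: nat)"
      using p q0 by (simp add: fq prime_elem_multiplicity_mult_distrib)
    have ms: "multiplicity p (Suc k) = Suc (multiplicity p q)"
      using p1 q0 q multiplicity_times_same[where p=p and x=q] by (simp add: q)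
    show ?thesis using Suc.IH m d1 d2 mq ms q0 by simp
  next
    case False
    have "Suc k div p = k div p" using False p1
      by (simp add: div_Suc dvd_eq_mod_eq_0)
    moreover have "multiplicity p (Suc k) = 0" using False by (simp add: not_dvd_imp_multiplicity_0)
    ultimately show ?thesis using Suc.IH m by simp
  qed
qed

lemma legendre_bound:
  fixes p k :: nat assumes p: "prime p"
  shows "(p - 1) * multiplicity p (fact k :: nat) \<le> k"
proof (induction k rule: less_induct)
  case (less k)
  have p1: "p > 1" using p prime_gt_1_nat by blast
  show ?case
  proof (cases "k = 0")
    case True then show ?thesis by simp
  next
    case False
    then have lt: "k div p < k" using p1 by simp
    have "(p - 1) * multiplicity p (fact k :: nat) = (p - 1) * (k div p) + (p - 1) * multiplicity p (fact (k div p) :: nat)"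
      using legendre_rec[OF p, of k] by (simp add: algebra_simps)
    also have "\<dots> \<le> (p - 1) * (k div p) + k div p" using less.IH[OF lt] by simp
    also have "\<dots> = p * (k div p)" using p1 by (simp add: algebra_simps)
    also have "\<dots> \<le> k" by simp
    finally show ?thesis .
  qed
qed

lemma legendre_bound':
  fixes p k :: nat assumes p: "prime p"
  shows "multiplicity p (fact k :: nat) \<le> k div (p - 1)"
proof -
  have p1: "p - 1 > 0" using p prime_gt_1_nat by simp
  show ?thesis using legendre_bound[OF p, of k] p1
    by (simp add: less_eq_div_iff_mult_less_eq mult.commute)
qed

lemma int_dvd_via_primes:
  fixes k :: nat and Y :: int
  assumes "\<And>p v. prime p \<Longrightarrow> p ^ v dvd (fact k :: nat) \<Longrightarrow> int p ^ v dvd Y"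
  shows "int (fact k) dvd Y"
proof -
  have "fact k dvd nat \<bar>Y\<bar>"
  proof (cases "Y = 0")
    case True then show ?thesis by simp
  next
    case False
    show ?thesis
    proof (rule multiplicity_le_imp_dvd)
      show "(fact k :: nat) \<noteq> 0" by simp
      fix p :: nat assume p: "prime p"
      have "int p ^ multiplicity p (fact k :: nat) dvd Y"
        using assms[OF p multiplicity_dvd] .
      then have "p ^ multiplicity p (fact k :: nat) dvd nat \<bar>Y\<bar>"
        by (simp add: dvd_nat_abs_iff)
      then show "multiplicity p (fact k :: nat) \<le> multiplicity p (nat \<bar>Y\<bar>)"
        using False p by (intro multiplicity_geI) auto
    qed
  qed
  then show ?thesis by (simp add: dvd_nat_abs_iff)
qed

lemma prod_ap_dvd:
  fixes r d P :: int and n k :: nat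
  assumes cop: "coprime d P" and Pd: "P dvd fact k"
  shows "P dvd (\<Prod>i=0..<k. r + (int n - int i) * d)"
proof -
  obtain d' where d': "[d * d' = 1] (mod P)" using cong_solve_coprime_int[OF cop] by blast
  define x where "x = r * d' + int n"
  have c: "[r + (int n - int i) * d = d * (x - int i)] (mod P)" for i
  proof -
    have "d * (x - int i) = (d * d') * r + (int n - int i) * d" by (simp add: x_def algebra_simps)
    moreover have "[(d * d') * r + (int n - int i) * d = 1 * r + (int n - int i) * d] (mod P)"
      by (intro cong_add cong_mult d' cong_refl)
    ultimately show ?thesis by (simp add: cong_sym)
  qed
  have "[(\<Prod>i=0..<k. r + (int n - int i) * d) = (\<Prod>i=0..<k. d * (x - int i))] (mod P)"
    by (intro cong_prod c)
  moreover have "(\<Prod>i=0..<k. d * (x - int i)) = d ^ k * (\<Prod>i=0..<k. x - int i)" by (simp add: prod.distrib)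
  moreover have "P dvd d ^ k * (\<Prod>i=0..<k. x - int i)"
  proof -
    have "fact k dvd (\<Prod>i=0..<k. x - int i)"
      by (simp only: falling_fact_pochhammer' fact_dvd_pochhammer)
    then show ?thesis using Pd by (meson dvd_mult dvd_trans)
  qed
  ultimately show ?thesis using cong_dvd_iff by metis
qed

lemma mu_gchoose:
  fixes s :: rat and n k :: nat assumes kn: "k \<le> n"
  shows "\<exists>N::int. of_nat (mu n s) * ((s + of_nat n) gchoose k) = of_int N"
proof -
  obtain r d where q: "quotient_of s = (r, d)" by (cases "quotient_of s") auto
  have d0: "d > 0" using quotient_of_denom_pos[OF q] .
  have s_eq: "s = of_int r / of_int d" using quotient_of_div[OF q] .
  define D where "D = nat d"
  have dD: "d = int D" using d0 by (simp add: D_def)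
  have D0: "D > 0" using d0 by (simp add: D_def)
  have den: "den_rat s = D" by (simp add: den_rat_def q D_def)
  define Pi :: nat where "Pi = (\<Prod>q\<in>prime_factors D. q ^ (n div (q - 1)))"
  have mu_eq: "mu n s = D ^ n * Pi" by (simp add: mu_def den Pi_def)
  define X where "X = (\<Prod>i=0..<k. r + (int n - int i) * d)"
  have G1: "(s + of_nat n) gchoose k = of_int X / (of_int d ^ k * fact k)"
  proof -
    have "(s + of_nat n) gchoose k = (\<Prod>i=0..<k. s + of_nat n - of_nat i) / fact k"
      by (simp add: gbinomial_prod_rev)
    also have "(\<Prod>i=0..<k. s + of_nat n - of_nat i) = (\<Prod>i=0..<k. of_int (r + (int n - int i) * d) / (of_int d :: rat))"
    proof (rule prod.cong[OF refl])
      fix i assume "i \<in> {0..<k}"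
      show "s + of_nat n - of_nat i = of_int (r + (int n - int i) * d) / (of_int d :: rat)"
        using d0 by (simp add: s_eq field_simps)
    qed
    also have "\<dots> = of_int X / of_int d ^ k"
      by (simp add: X_def prod_dividef)
    finally show ?thesis by simp
  qed
  have G2: "int (fact k) dvd int Pi * X"
  proof (rule int_dvd_via_primes)
    fix p v assume p: "prime p" and pv: "p ^ v dvd (fact k :: nat)"
    have v: "v \<le> multiplicity p (fact k :: nat)"
      using pv p by (auto intro: multiplicity_geI)
    show "int p ^ v dvd int Pi * X"
    proof (cases "p dvd D")
      case True
      then have pf: "p \<in> prime_factors D" using p D0 by (simp add: in_prime_factors_iff)
      have "v \<le> k div (p - 1)" using v legendre_bound'[OF p, of k] by linarith
      also have "\<dots> \<le> n div (p - 1)" using kn by (simp add: div_le_mono)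
      finally have "p ^ v dvd p ^ (n div (p - 1))" by (simp add: le_imp_power_dvd)
      also have "\<dots> dvd Pi" unfolding Pi_def using pf by (intro dvd_prodI) auto
      finally have "int p ^ v dvd int Pi" by (metis int_dvd_int_iff of_nat_power)
      then show ?thesis by simp
    next
      case False
      have "coprime p D" using False p by (simp add: prime_imp_coprime)
      then have "coprime D (p ^ v)" by (simp add: coprime_commute)
      then have cop: "coprime d (int p ^ v)" by (simp add: dD coprime_int_iff[symmetric] del: coprime_int_iff)
      have Pd: "int p ^ v dvd fact k" using pv by (metis int_dvd_int_iff of_nat_fact of_nat_power)
      have "int p ^ v dvd X" unfolding X_def by (rule prod_ap_dvd[OF cop Pd])
      then show ?thesis by simp
    qed
  qed
  then obtain Y where Y: "int Pi * X = int (fact k) * Y" by blast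
  have "of_nat (mu n s) * ((s + of_nat n) gchoose k) = (of_int (d ^ (n - k) * Y) :: rat)"
  proof -
    have "(of_nat (mu n s) :: rat) = of_int d ^ (n - k) * of_int d ^ k * of_nat Pi"
      using kn by (simp add: mu_eq dD power_add[symmetric])
    then have "of_nat (mu n s) * ((s + of_nat n) gchoose k) = of_int d ^ (n - k) * (of_int (int Pi * X)) / fact k"
      using d0 by (simp add: G1 field_simps)
    also have "\<dots> = of_int d ^ (n - k) * of_int Y"
      by (simp add: Y)
    finally show ?thesis by simp
  qed
  then show ?thesis by blast
qed

definition Efac :: "'a::field_char_0 \<Rightarrow> 'a \<Rightarrow> nat \<Rightarrow> nat \<Rightarrow> 'a poly" where
  "Efac \<sigma> \<alpha> e j = smult ((\<sigma> + of_nat e) gchoose j) ([:-\<alpha>,1:]^(e-j))"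

lemma of_nat_mult_poly: "(of_nat n :: 'a::comm_ring_1 poly) * p = smult (of_nat n) p"
  by (simp add: of_nat_poly)

lemma gchoose_step: "(a - of_nat j) * (a gchoose j) = of_nat (Suc j) * (a gchoose Suc j)"
  for a :: "'a::field_char_0"
  by (simp only: gbinomial_absorb_comp gbinomial_absorption)

lemma Efac_step:
  fixes \<sigma> \<alpha> :: "'a::field_char_0"
  assumes "\<sigma> = 0 \<or> j < e"
  shows "of_nat (Suc j) * ([:-\<alpha>,1:] * Efac \<sigma> \<alpha> e (Suc j))
         = [:-\<alpha>,1:] * pderiv (Efac \<sigma> \<alpha> e j) + smult \<sigma> (Efac \<sigma> \<alpha> e j)"
proof (cases "j < e")
  case True
  define t where "t = e - Suc j"
  have et: "e - j = Suc t" "e - Suc j = t" using True by (auto simp: t_def)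
  define X :: "'a poly" where "X = [:-\<alpha>,1:]"
  define a where "a = \<sigma> + of_nat e"
  have id: "of_nat (Suc j) * (a gchoose Suc j) = (a gchoose j) * of_nat (Suc t) + \<sigma> * (a gchoose j)"
  proof -
    have "a - of_nat j = \<sigma> + of_nat (Suc t)" using et True
      by (simp add: a_def of_nat_diff[symmetric] del: of_nat_Suc)
    then show ?thesis using gchoose_step[of a j] by (simp add: algebra_simps)
  qed
  have pd: "pderiv (X ^ Suc t) = smult (of_nat (Suc t)) (X ^ t)"
    by (simp only: pderiv_power_Suc) (simp add: X_def pderiv_pCons)
  have L: "of_nat (Suc j) * (X * smult (a gchoose Suc j) (X ^ t)) = smult (of_nat (Suc j) * (a gchoose Suc j)) (X ^ Suc t)"
    by (simp add: of_nat_mult_poly mult.commute del: of_nat_Suc)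
  have pd2: "pderiv (smult (a gchoose j) (X ^ Suc t)) = smult ((a gchoose j) * of_nat (Suc t)) (X ^ t)"
    by (simp only: pderiv_smult pd smult_smult)
  have R: "X * pderiv (smult (a gchoose j) (X ^ Suc t)) + smult \<sigma> (smult (a gchoose j) (X ^ Suc t))
      = smult ((a gchoose j) * of_nat (Suc t) + \<sigma> * (a gchoose j)) (X ^ Suc t)"
    unfolding pd2 by (simp add: smult_add_left del: of_nat_Suc)
  show ?thesis
    unfolding Efac_def et X_def[symmetric] a_def[symmetric] L R id ..
next
  case False
  then have s: "\<sigma> = 0" and ej: "e - j = 0" "e - Suc j = 0" using assms by auto
  have "(of_nat e gchoose Suc j :: 'a) = 0"
    using False by (simp add: binomial_gbinomial[symmetric])
  then show ?thesis unfolding Efac_def ej s by simp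
qed

lemma conv_comb:
  fixes F :: "nat \<Rightarrow> 'a::comm_ring_1"
  shows "(\<Sum>j\<le>k. of_nat (Suc j) * F (Suc j)) + (\<Sum>j\<le>k. of_nat (Suc k - j) * F j)
         = of_nat (Suc k) * (\<Sum>j\<le>Suc k. F j)"
proof -
  have 1: "(\<Sum>j\<le>k. of_nat (Suc j) * F (Suc j)) = (\<Sum>j\<le>Suc k. of_nat j * F j)"
    by (simp only: sum.atMost_Suc_shift) simp
  have 2: "(\<Sum>j\<le>k. of_nat (Suc k - j) * F j) = (\<Sum>j\<le>Suc k. of_nat (Suc k - j) * F j)"
    by (simp only: sum.atMost_Suc) simp
  have "(\<Sum>j\<le>Suc k. of_nat j * F j) + (\<Sum>j\<le>Suc k. of_nat (Suc k - j) * F j)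
       = (\<Sum>j\<le>Suc k. of_nat (Suc k) * F j)"
    by (simp only: sum.distrib[symmetric], rule sum.cong, simp_all add: algebra_simps of_nat_diff)
  then show ?thesis unfolding 1 2 sum_distrib_left .
qed

lemma pderiv_sum': "pderiv (sum f A) = (\<Sum>x\<in>A. pderiv (f x))"
  by (induct A rule: infinite_finite_induct) (simp_all add: pderiv_add)

lemma conv_step:
  fixes E T :: "nat \<Rightarrow> 'a::field_char_0 poly" and X A B :: "'a poly" and \<sigma> :: 'a
  assumes hE: "\<And>j. j \<le> k \<Longrightarrow> of_nat (Suc j) * (X * E (Suc j)) = X * pderiv (E j) + smult \<sigma> (E j)"
  and hT: "\<And>j. j \<le> k \<Longrightarrow> of_nat (Suc j) * (A * T (Suc j)) = A * pderiv (T j) + B * T j"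
  shows "of_nat (Suc k) * (X * A * (\<Sum>j\<le>Suc k. E j * T (Suc k - j)))
       = X * A * pderiv (\<Sum>j\<le>k. E j * T (k - j)) + (smult \<sigma> A + X * B) * (\<Sum>j\<le>k. E j * T (k - j))"
proof -
  have "X * A * pderiv (\<Sum>j\<le>k. E j * T (k - j)) + (smult \<sigma> A + X * B) * (\<Sum>j\<le>k. E j * T (k - j))
      = (\<Sum>j\<le>k. A * T (k - j) * (X * pderiv (E j) + smult \<sigma> (E j)) + X * E j * (A * pderiv (T (k - j)) + B * T (k - j)))"
    by (simp add: pderiv_sum' pderiv_mult sum_distrib_left sum.distrib[symmetric] algebra_simps)
  also have "\<dots> = (\<Sum>j\<le>k. A * T (k - j) * (of_nat (Suc j) * (X * E (Suc j))) + X * E j * (of_nat (Suc (k - j)) * (A * T (Suc (k - j)))))"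
    by (rule sum.cong[OF refl]) (simp add: hE hT del: of_nat_Suc)
  also have "\<dots> = X * A * ((\<Sum>j\<le>k. of_nat (Suc j) * (E (Suc j) * T (Suc k - Suc j))) + (\<Sum>j\<le>k. of_nat (Suc k - j) * (E j * T (Suc k - j))))"
    by (simp add: sum_distrib_left sum.distrib[symmetric] Suc_diff_le algebra_simps del: of_nat_Suc)
  also have "\<dots> = X * A * (of_nat (Suc k) * (\<Sum>j\<le>Suc k. E j * T (Suc k - j)))"
    using conv_comb[where k=k and F="\<lambda>j. E j * T (Suc k - j)"] by simp
  finally show ?thesis by (simp add: algebra_simps)
qed

fun Tl :: "(nat \<Rightarrow> 'a::field_char_0) \<Rightarrow> (nat \<Rightarrow> 'a) \<Rightarrow> nat \<Rightarrow> nat list \<Rightarrow> nat \<Rightarrow> 'a poly" where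
  "Tl \<sigma> \<alpha> e [] k = (if k = 0 then 1 else 0)"
| "Tl \<sigma> \<alpha> e (x # xs) k = (\<Sum>j\<le>k. Efac (\<sigma> x) (\<alpha> x) e j * Tl \<sigma> \<alpha> e xs (k - j))"

definition Al :: "(nat \<Rightarrow> 'a::field_char_0) \<Rightarrow> nat list \<Rightarrow> 'a poly" where
  "Al \<alpha> xs = prod_list (map (\<lambda>i. [:-\<alpha> i, 1:]) xs)"

fun Bl :: "(nat \<Rightarrow> 'a::field_char_0) \<Rightarrow> (nat \<Rightarrow> 'a) \<Rightarrow> nat list \<Rightarrow> 'a poly" where
  "Bl \<sigma> \<alpha> [] = 0"
| "Bl \<sigma> \<alpha> (x # xs) = smult (\<sigma> x) (Al \<alpha> xs) + [:-\<alpha> x, 1:] * Bl \<sigma> \<alpha> xs"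

lemma Tl_step:
  assumes "k < e"
  shows "of_nat (Suc k) * (Al \<alpha> xs * Tl \<sigma> \<alpha> e xs (Suc k))
       = Al \<alpha> xs * pderiv (Tl \<sigma> \<alpha> e xs k) + Bl \<sigma> \<alpha> xs * Tl \<sigma> \<alpha> e xs k"
  using assms
proof (induction xs arbitrary: k)
  case Nil
  then show ?case by (simp add: Al_def)
next
  case (Cons x xs)
  have "of_nat (Suc k) * ([:-\<alpha> x, 1:] * Al \<alpha> xs * (\<Sum>j\<le>Suc k. Efac (\<sigma> x) (\<alpha> x) e j * Tl \<sigma> \<alpha> e xs (Suc k - j)))
       = [:-\<alpha> x, 1:] * Al \<alpha> xs * pderiv (\<Sum>j\<le>k. Efac (\<sigma> x) (\<alpha> x) e j * Tl \<sigma> \<alpha> e xs (k - j))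
         + (smult (\<sigma> x) (Al \<alpha> xs) + [:-\<alpha> x, 1:] * Bl \<sigma> \<alpha> xs) * (\<Sum>j\<le>k. Efac (\<sigma> x) (\<alpha> x) e j * Tl \<sigma> \<alpha> e xs (k - j))"
  proof (rule conv_step)
    fix j assume "j \<le> k"
    then have "j < e" using Cons.prems by simp
    then show "of_nat (Suc j) * ([:-\<alpha> x, 1:] * Efac (\<sigma> x) (\<alpha> x) e (Suc j))
             = [:-\<alpha> x, 1:] * pderiv (Efac (\<sigma> x) (\<alpha> x) e j) + smult (\<sigma> x) (Efac (\<sigma> x) (\<alpha> x) e j)"
      by (intro Efac_step) simp
    show "of_nat (Suc j) * (Al \<alpha> xs * Tl \<sigma> \<alpha> e xs (Suc j)) = Al \<alpha> xs * pderiv (Tl \<sigma> \<alpha> e xs j) + Bl \<sigma> \<alpha> xs * Tl \<sigma> \<alpha> e xs j"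
      using \<open>j < e\<close> by (rule Cons.IH)
  qed
  then show ?case by (simp add: Al_def)
qed

lemma Tl_0: "Tl \<sigma> \<alpha> e xs 0 = Al \<alpha> xs ^ e"
  by (induction xs) (simp_all add: Al_def Efac_def power_mult_distrib del: mult_pCons_left)

lemma Al_set: "distinct xs \<Longrightarrow> Al \<alpha> xs = (\<Prod>i\<in>set xs. [:-\<alpha> i, 1:])"
  by (induction xs) (simp_all add: Al_def)

lemma Bl_set: "distinct xs \<Longrightarrow> Bl \<sigma> \<alpha> xs = (\<Sum>i\<in>set xs. smult (\<sigma> i) (\<Prod>j\<in>set xs - {i}. [:-\<alpha> j, 1:]))"
proof (induction xs)
  case Nil then show ?case by simp
next
  case (Cons x xs)
  have x: "x \<notin> set xs" using Cons.prems by simp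
  have 1: "(\<Prod>j\<in>insert x (set xs) - {x}. [:-\<alpha> j, 1:]) = Al \<alpha> xs"
    using x Cons.prems by (simp add: Al_set)
  have 2: "(\<Prod>j\<in>insert x (set xs) - {i}. [:-\<alpha> j, 1:]) = [:-\<alpha> x, 1:] * (\<Prod>j\<in>set xs - {i}. [:-\<alpha> j, 1:])"
    if "i \<in> set xs" for i
  proof -
    have "insert x (set xs) - {i} = insert x (set xs - {i})" using that x by auto
    then show ?thesis using x by simp
  qed
  show ?case using Cons x
    by (simp add: 1 2 sum_distrib_left mult_smult_right Al_set del: mult_pCons_left cong: sum.cong)
qed

lemma a_pderiv_pow: "a * pderiv (a ^ k) = smult (of_nat k) (a ^ k * pderiv a)"
  by (cases k) (simp_all add: pderiv_power_Suc mult_ac del: power_Suc, simp add: mult_ac)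

lemma Qop_closed:
  fixes a b :: "'a::field_char_0 poly" and Tf :: "nat \<Rightarrow> 'a poly"
  assumes step: "\<And>k. k < n \<Longrightarrow> of_nat (Suc k) * (a * Tf (Suc k)) = a * pderiv (Tf k) + b * Tf k"
    and T0: "Tf 0 = F"
  shows "k \<le> n \<Longrightarrow> Qop a b F k = smult (fact k) (a ^ k * Tf k)"
proof (induction k)
  case 0 then show ?case by (simp add: T0)
next
  case (Suc k)
  then have IH: "Qop a b F k = smult (fact k) (a ^ k * Tf k)" by simp
  have kn: "k < n" using Suc.prems by simp
  have ap: "a * (Tf k * pderiv (a ^ k)) = smult (of_nat k) (pderiv a * (Tf k * a ^ k))"
  proof -
    have "a * (Tf k * pderiv (a ^ k)) = Tf k * (a * pderiv (a ^ k))" by (simp add: mult_ac)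
    also have "\<dots> = Tf k * smult (of_nat k) (a ^ k * pderiv a)" by (simp only: a_pderiv_pow)
    also have "\<dots> = smult (of_nat k) (pderiv a * (Tf k * a ^ k))" by (simp add: mult_ac)
    finally show ?thesis .
  qed
  have "Qop a b F (Suc k) = smult (fact k) (a * pderiv (a ^ k * Tf k) + (b - smult (of_nat k) (pderiv a)) * (a ^ k * Tf k))"
    by (simp add: IH pderiv_smult smult_add_right smult_diff_right algebra_simps)
  also have "a * pderiv (a ^ k * Tf k) + (b - smult (of_nat k) (pderiv a)) * (a ^ k * Tf k)
      = a ^ k * (a * pderiv (Tf k) + b * Tf k)"
    by (simp add: pderiv_mult ring_distribs ap) (simp add: algebra_simps)
  also have "a * pderiv (Tf k) + b * Tf k = of_nat (Suc k) * (a * Tf (Suc k))"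
    using step[OF kn] by simp
  finally show ?case
    by (simp add: of_nat_mult_poly algebra_simps del: of_nat_Suc)
qed

context
  fixes absv :: "'a::field_char_0 \<Rightarrow> real"
  assumes v: "nonarch_place_abs absv"
begin

lemma av_nonneg: "0 \<le> absv x" using v by (simp add: nonarch_place_abs_def)
lemma av_zero_iff: "absv x = 0 \<longleftrightarrow> x = 0" using v by (simp add: nonarch_place_abs_def)
lemma av_mult: "absv (x * y) = absv x * absv y" using v by (simp add: nonarch_place_abs_def)
lemma av_ultra: "absv (x + y) \<le> max (absv x) (absv y)" using v by (simp add: nonarch_place_abs_def)

lemma av_0 [simp]: "absv 0 = 0" using av_zero_iff by simp

lemma av_one: "absv 1 = 1"
proof -
  have "absv 1 = absv 1 * absv 1" using av_mult[of 1 1] by simp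
  moreover have "absv 1 \<noteq> 0" using av_zero_iff by simp
  ultimately show ?thesis by simp
qed

lemma av_minus: "absv (- x) = absv x"
proof -
  have "absv (-1) * absv (-1) = 1" using av_mult[of "-1" "-1"] av_one by simp
  then have "(absv (-1))\<^sup>2 = 1" by (simp add: power2_eq_square)
  then have "absv (-1) = 1 \<or> absv (-1) = -1" by (simp add: power2_eq_1_iff)
  then have "absv (-1) = 1" using av_nonneg[of "-1"] by linarith
  then show ?thesis using av_mult[of "-1" x] by simp
qed

lemma av_of_nat: "absv (of_nat n) \<le> 1"
proof (induction n)
  case 0 then show ?case using av_zero_iff by simp
next
  case (Suc n)
  have "absv (of_nat (Suc n)) = absv (1 + of_nat n)" by simp
  also have "\<dots> \<le> max (absv 1) (absv (of_nat n))" by (rule av_ultra)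
  finally show ?case using Suc.IH av_one by simp
qed

lemma av_of_int: "absv (of_int z) \<le> 1"
proof (cases "z \<ge> 0")
  case True then show ?thesis using av_of_nat[of "nat z"] by simp
next
  case False
  then have "of_int z = - (of_nat (nat (- z)) :: 'a)" by simp
  then show ?thesis using av_of_nat[of "nat (-z)"] av_minus by simp
qed

lemma av_sum: "(\<And>i. i \<in> S \<Longrightarrow> absv (f i) \<le> C) \<Longrightarrow> 0 \<le> C \<Longrightarrow> absv (sum f S) \<le> C"
proof (induction S rule: infinite_finite_induct)
  case (infinite A) then show ?case using av_zero_iff by simp
next
  case empty then show ?case using av_zero_iff by simp
next
  case (insert x F)
  have "absv (sum f (insert x F)) = absv (f x + sum f F)" using insert.hyps by simp
  also have "\<dots> \<le> max (absv (f x)) (absv (sum f F))" by (rule av_ultra)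
  also have "\<dots> \<le> C" using insert by simp
  finally show ?case .
qed

definition cb :: "'a poly \<Rightarrow> real \<Rightarrow> bool" where
  "cb p C \<longleftrightarrow> (\<forall>k. absv (coeff p k) \<le> C)"

lemma cb_sum: "(\<And>i. i \<in> S \<Longrightarrow> cb (f i) C) \<Longrightarrow> 0 \<le> C \<Longrightarrow> cb (sum f S) C"
  unfolding cb_def by (auto simp: coeff_sum intro!: av_sum)

lemma cb_mult: assumes "cb p C1" "cb q C2" "0 \<le> C1" "0 \<le> C2" shows "cb (p * q) (C1 * C2)"
  unfolding cb_def
proof
  fix k
  show "absv (coeff (p * q) k) \<le> C1 * C2"
    unfolding coeff_mult
  proof (rule av_sum)
    fix i
    show "absv (coeff p i * coeff q (k - i)) \<le> C1 * C2"
      using assms unfolding cb_def av_mult by (intro mult_mono) (auto simp: av_nonneg)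
  qed (use assms in simp)
qed

lemma cb_smult: assumes "cb p C" "absv c \<le> D" "0 \<le> C" shows "cb (smult c p) (D * C)"
proof -
  have "0 \<le> D" using av_nonneg[of c] assms(2) by linarith
  then show ?thesis using assms unfolding cb_def by (auto simp: av_mult intro!: mult_mono av_nonneg)
qed

lemma cb_one: "cb 1 1"
  unfolding cb_def by (simp add: av_one)

lemma cb_mono: "cb p C \<Longrightarrow> C \<le> D \<Longrightarrow> cb p D"
  unfolding cb_def by (meson order_trans)

lemma cb_power: assumes "cb p C" "1 \<le> C" shows "cb (p ^ n) (C ^ n)"
proof (induction n)
  case 0 then show ?case using cb_one by simp
next
  case (Suc n)
  show ?case using cb_mult[OF assms(1) Suc.IH] assms(2) by simp
qed

lemma cb_lin: "cb [:-\<alpha>, 1:] (max 1 (absv \<alpha>))"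
  unfolding cb_def
proof
  fix k
  show "absv (coeff [:-\<alpha>, 1:] k) \<le> max 1 (absv \<alpha>)"
  proof (cases k)
    case 0 then show ?thesis by (simp add: av_minus)
  next
    case (Suc k')
    then show ?thesis
    proof (cases k')
      case 0 then show ?thesis using Suc by (simp add: av_one)
    next
      case (Suc k'') then show ?thesis using \<open>k = Suc k'\<close> by simp
    qed
  qed
qed

end

lemma of_rat_gchoose: "of_rat (x gchoose k) = (of_rat x :: 'a::field_char_0) gchoose k"
proof -
  have f: "of_rat (fact k :: rat) = (fact k :: 'a)" by (metis of_nat_fact of_rat_of_nat_eq)
  show ?thesis
    by (simp add: gbinomial_prod_rev of_rat_divide of_rat_prod of_rat_diff f)
qed

lemma mu_pos: "mu n s > 0"
proof -
  have "den_rat s > 0" unfolding den_rat_def using quotient_of_denom_pos'[of s] by simp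
  moreover have "(\<Prod>q\<in>prime_factors (den_rat s). q ^ (n div (q - 1))) > 0"
    by (intro prod_pos) (auto intro: prime_gt_0_nat)
  ultimately show ?thesis unfolding mu_def by simp
qed

lemma poly_lagr:
  fixes \<alpha> :: "nat \<Rightarrow> 'a::field_char_0"
  assumes i: "i < m"
  shows "poly (\<Sum>i'<m. smult (c i') (\<Prod>j\<in>{..<m}-{i'}. [:-\<alpha> j, 1:])) (\<alpha> i)
         = c i * (\<Prod>j\<in>{..<m}-{i}. (\<alpha> i - \<alpha> j))"
proof -
  have "poly (\<Sum>i'<m. smult (c i') (\<Prod>j\<in>{..<m}-{i'}. [:-\<alpha> j, 1:])) (\<alpha> i)
      = (\<Sum>i'<m. c i' * (\<Prod>j\<in>{..<m}-{i'}. (\<alpha> i - \<alpha> j)))"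
    by (simp add: poly_sum poly_prod)
  also have "\<dots> = c i * (\<Prod>j\<in>{..<m}-{i}. (\<alpha> i - \<alpha> j)) + (\<Sum>i'\<in>{..<m}-{i}. c i' * (\<Prod>j\<in>{..<m}-{i'}. (\<alpha> i - \<alpha> j)))"
    using i by (subst sum.remove[of _ i]) auto
  also have "(\<Sum>i'\<in>{..<m}-{i}. c i' * (\<Prod>j\<in>{..<m}-{i'}. (\<alpha> i - \<alpha> j))) = 0"
  proof (rule sum.neutral, rule ballI)
    fix i' assume "i' \<in> {..<m}-{i}"
    then have "i \<in> {..<m}-{i'}" using i by auto
    then have "(\<Prod>j\<in>{..<m}-{i'}. (\<alpha> i - \<alpha> j)) = 0"
      by (intro prod_zero) auto
    then show "c i' * (\<Prod>j\<in>{..<m}-{i'}. (\<alpha> i - \<alpha> j)) = 0" by simp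
  qed
  finally show ?thesis by simp
qed

lemma prod_list_ge1: "(\<And>x. x \<in> set xs \<Longrightarrow> (1::real) \<le> x) \<Longrightarrow> 1 \<le> prod_list xs"
proof (induction xs)
  case Nil then show ?case by simp
next
  case (Cons x xs)
  have "1 \<le> x" "1 \<le> prod_list xs" using Cons by auto
  then show ?case using mult_mono[of 1 x 1 "prod_list xs"] by simp
qed

context
  fixes absv :: "'a::field_char_0 \<Rightarrow> real"
  assumes v: "nonarch_place_abs absv"
begin

lemma av_div: "y \<noteq> 0 \<Longrightarrow> absv (x / y) = absv x / absv y"
proof -
  assume y: "y \<noteq> 0"
  have "absv x = absv (x / y) * absv y" using av_mult[OF v, of "x / y" y] y by simp
  moreover have "absv y \<noteq> 0" using av_zero_iff[OF v] y by simp
  ultimately show ?thesis by simp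
qed

lemma av_mu: "0 < absv (of_nat (mu n s))" "absv (of_nat (mu n s)) \<le> 1"
proof -
  have "(of_nat (mu n s) :: 'a) \<noteq> 0" using mu_pos[of n s] by simp
  then show "0 < absv (of_nat (mu n s))" using av_nonneg[OF v] av_zero_iff[OF v]
    by (metis less_eq_real_def)
  show "absv (of_nat (mu n s)) \<le> 1" by (rule av_of_nat[OF v])
qed

lemma gch_bound:
  assumes "k \<le> n"
  shows "absv ((of_rat s + of_nat n) gchoose k) \<le> 1 / absv (of_nat (mu n s))"
proof -
  obtain N where N: "of_nat (mu n s) * ((s + of_nat n) gchoose k) = (of_int N :: rat)"
    using mu_gchoose[OF assms] by blast
  have mu0: "(of_nat (mu n s) :: rat) \<noteq> 0" using mu_pos[of n s] by simp
  have "(of_rat s + of_nat n) gchoose k = (of_rat ((s + of_nat n) gchoose k) :: 'a)"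
    by (simp add: of_rat_gchoose of_rat_add)
  also have "(s + of_nat n) gchoose k = of_int N / of_nat (mu n s)"
    using N mu0 by (simp add: field_simps)
  also have "(of_rat (of_int N / of_nat (mu n s)) :: 'a) = of_int N / of_nat (mu n s)"
    by (simp add: of_rat_divide)
  finally have e: "(of_rat s + of_nat n) gchoose k = (of_int N / of_nat (mu n s) :: 'a)" .
  have mu0': "(of_nat (mu n s) :: 'a) \<noteq> 0" using mu_pos[of n s] by simp
  show ?thesis unfolding e av_div[OF mu0']
    using av_of_int[OF v, of N] av_mu[of n s] by (simp add: divide_right_mono)
qed

definition Mb :: "(nat \<Rightarrow> rat) \<Rightarrow> (nat \<Rightarrow> 'a) \<Rightarrow> nat \<Rightarrow> nat \<Rightarrow> real" where
  "Mb s \<alpha> n i = 1 / absv (of_nat (mu n (s i))) * max 1 (absv (\<alpha> i)) ^ n"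

lemma Mb_ge1: "1 \<le> Mb s \<alpha> n i"
proof -
  have a: "1 \<le> 1 / absv (of_nat (mu n (s i)))" using av_mu[of n "s i"] by simp
  have b: "1 \<le> max 1 (absv (\<alpha> i)) ^ n" by simp
  show ?thesis unfolding Mb_def using mult_mono[OF a b] by (simp add: av_nonneg[OF v])
qed

lemma Efac_cb:
  assumes "j \<le> n"
  shows "cb absv (Efac (of_rat (s i)) (\<alpha> i) n j) (Mb s \<alpha> n i)"
proof -
  have c1: "cb absv ([:-\<alpha> i, 1:] ^ (n - j)) (max 1 (absv (\<alpha> i)) ^ (n - j))"
    by (rule cb_power[OF v cb_lin[OF v]]) simp
  have "cb absv (Efac (of_rat (s i)) (\<alpha> i) n j) (1 / absv (of_nat (mu n (s i))) * max 1 (absv (\<alpha> i)) ^ (n - j))"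
    unfolding Efac_def by (rule cb_smult[OF v c1 gch_bound[OF assms]]) simp
  moreover have "1 / absv (of_nat (mu n (s i))) * max 1 (absv (\<alpha> i)) ^ (n - j) \<le> Mb s \<alpha> n i"
    unfolding Mb_def using av_mu[of n "s i"]
    by (intro mult_left_mono power_increasing) auto
  ultimately show ?thesis by (rule cb_mono[OF v])
qed

lemma Tl_cb:
  "k \<le> n \<Longrightarrow> cb absv (Tl (\<lambda>i. of_rat (s i)) \<alpha> n ys k) (prod_list (map (Mb s \<alpha> n) ys))"
proof (induction ys arbitrary: k)
  case Nil
  show ?case using cb_one[OF v] by (auto simp: cb_def[OF v] av_0[OF v])
next
  case (Cons x ys)
  have P1: "1 \<le> prod_list (map (Mb s \<alpha> n) ys)"
    by (rule prod_list_ge1) (auto intro: Mb_ge1)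
  have "cb absv (\<Sum>j\<le>k. Efac (of_rat (s x)) (\<alpha> x) n j * Tl (\<lambda>i. of_rat (s i)) \<alpha> n ys (k - j))
          (Mb s \<alpha> n x * prod_list (map (Mb s \<alpha> n) ys))"
  proof (rule cb_sum[OF v])
    fix j assume "j \<in> {..k}"
    then have "j \<le> n" "k - j \<le> n" using Cons.prems by auto
    show "cb absv (Efac (of_rat (s x)) (\<alpha> x) n j * Tl (\<lambda>i. of_rat (s i)) \<alpha> n ys (k - j))
          (Mb s \<alpha> n x * prod_list (map (Mb s \<alpha> n) ys))"
      using Mb_ge1[of s \<alpha> n x] P1
      by (intro cb_mult[OF v] Efac_cb Cons.IH \<open>j \<le> n\<close> \<open>k - j \<le> n\<close>) auto
  next
    show "0 \<le> Mb s \<alpha> n x * prod_list (map (Mb s \<alpha> n) ys)"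
      using Mb_ge1[of s \<alpha> n x] P1 by simp
  qed
  then show ?case by simp
qed

end

theorem lemma4p7:
  fixes a b :: "'a::field_char_0 poly"
    and \<alpha> :: "nat \<Rightarrow> 'a" and s :: "nat \<Rightarrow> rat"
    and absv :: "'a \<Rightarrow> real" and m n :: nat
  assumes K: "is_number_field TYPE('a)"
    and m: "m \<ge> 2"
    and a_monic: "lead_coeff a = 1" and a_deg: "degree a = m"
    and b_deg: "degree b \<le> m - 1"
    and a_prod: "a = (\<Prod>i<m. [:- \<alpha> i, 1:])"
    and \<alpha>_dist: "inj_on \<alpha> {..<m}"
    and s_def: "\<And>i. i < m \<Longrightarrow> of_rat (s i) = poly b (\<alpha> i) / poly (pderiv a) (\<alpha> i)"
    and s_notint: "\<And>i (k::int). i < m \<Longrightarrow> k \<le> -1 \<Longrightarrow> s i \<noteq> of_int k"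
    and bm1: "\<And>k::int. k < -1 \<Longrightarrow> coeff b (m - 1) \<noteq> of_int k"
    and v: "nonarch_place_abs absv"
    and n: "n > 0"
  shows "ln (Max ((\<lambda>l. vnorm absv (Ppoly a b n l)) ` {0..m}))
           \<le> (\<Sum>i<m. - ln (absv (of_nat (mu n (s i)))) + real n * hv absv (\<alpha> i))"
proof -
  define xs where "xs = [0..<m]"
  define \<sigma> where "\<sigma> = (\<lambda>i. (of_rat (s i) :: 'a))"
  have dxs: "distinct xs" and sxs: "set xs = {..<m}" by (auto simp: xs_def)
  have aA: "a = Al \<alpha> xs" using a_prod by (simp add: Al_set[OF dxs] sxs)
  define Pr where "Pr = (\<lambda>i. \<Prod>j\<in>{..<m}-{i}. (\<alpha> i - \<alpha> j))"
  have Pr0: "Pr i \<noteq> 0" if "i < m" for i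
    using \<alpha>_dist that unfolding Pr_def by (auto simp: inj_on_def)
  have pa: "pderiv a = (\<Sum>i'<m. smult 1 (\<Prod>j\<in>{..<m}-{i'}. [:-\<alpha> j, 1:]))"
    unfolding a_prod by (simp add: pderiv_prod pderiv_pCons)
  have bB: "b = Bl \<sigma> \<alpha> xs"
  proof -
    have B: "Bl \<sigma> \<alpha> xs = (\<Sum>i<m. smult (\<sigma> i) (\<Prod>j\<in>{..<m}-{i}. [:-\<alpha> j, 1:]))"
      by (simp add: Bl_set[OF dxs] sxs)
    show ?thesis
    proof (rule poly_eqI_degree[where A = "\<alpha> ` {..<m}"])
      fix x assume "x \<in> \<alpha> ` {..<m}"
      then obtain i where i: "i < m" "x = \<alpha> i" by auto
      have "poly (pderiv a) (\<alpha> i) = Pr i" unfolding pa Pr_def using poly_lagr[OF i(1), of "\<lambda>_. 1" \<alpha>] by simp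
      then have "poly b (\<alpha> i) = \<sigma> i * Pr i" using s_def[OF i(1)] Pr0[OF i(1)] by (simp add: \<sigma>_def field_simps)
      also have "\<dots> = poly (Bl \<sigma> \<alpha> xs) (\<alpha> i)" unfolding B Pr_def using poly_lagr[OF i(1), of \<sigma> \<alpha>] by simp
      finally show "poly b x = poly (Bl \<sigma> \<alpha> xs) x" using i by simp
    next
      have c: "card (\<alpha> ` {..<m}) = m" using card_image[OF \<alpha>_dist] by simp
      show "degree b < card (\<alpha> ` {..<m})" using b_deg m c by simp
      have "degree (Bl \<sigma> \<alpha> xs) \<le> m - 1" unfolding B
      proof (intro degree_sum_le)
        fix i assume "i \<in> {..<m}"
        have "degree (smult (\<sigma> i) (\<Prod>j\<in>{..<m}-{i}. [:-\<alpha> j, 1:])) \<le> degree (\<Prod>j\<in>{..<m}-{i}. [:-\<alpha> j, 1:])"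
          by (rule degree_smult_le)
        also have "\<dots> \<le> sum (degree \<circ> (\<lambda>j. [:-\<alpha> j, 1:])) ({..<m}-{i})" by (rule degree_prod_sum_le) simp
        also have "\<dots> = m - 1" using \<open>i \<in> {..<m}\<close> by simp
        finally show "degree (smult (\<sigma> i) (\<Prod>j\<in>{..<m}-{i}. [:-\<alpha> j, 1:])) \<le> m - 1" .
      qed simp
      then show "degree (Bl \<sigma> \<alpha> xs) < card (\<alpha> ` {..<m})" using m c by simp
    qed
  qed
  have a0: "a \<noteq> 0" using a_monic by auto
  define Tf where "Tf = (\<lambda>l k. (\<Sum>j\<le>k. Efac 0 0 l j * Tl \<sigma> \<alpha> n xs (k - j)))"
  have stepT: "of_nat (Suc k) * (a * Tf l (Suc k)) = a * pderiv (Tf l k) + b * Tf l k" if kn: "k < n" for l k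
  proof -
    have "of_nat (Suc k) * ([:-0,1:] * a * Tf l (Suc k)) = [:-0,1:] * a * pderiv (Tf l k) + (smult 0 a + [:-0,1:] * b) * Tf l k"
      unfolding Tf_def
    proof (rule conv_step)
      fix j assume j: "j \<le> k"
      show "of_nat (Suc j) * ([:-0,1:] * Efac 0 0 l (Suc j)) = [:-0,1:] * pderiv (Efac 0 0 l j) + smult 0 (Efac 0 0 l j)"
        by (rule Efac_step) simp
      show "of_nat (Suc j) * (a * Tl \<sigma> \<alpha> n xs (Suc j)) = a * pderiv (Tl \<sigma> \<alpha> n xs j) + b * Tl \<sigma> \<alpha> n xs j"
        unfolding aA bB using j kn by (intro Tl_step) simp
    qed
    moreover define X where "X = [:0::'a, 1:]"
    ultimately have H: "of_nat (Suc k) * (X * a * Tf l (Suc k)) = X * a * pderiv (Tf l k) + (smult 0 a + X * b) * Tf l k"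
      by (simp only: minus_zero)
    have X0: "X \<noteq> 0" by (simp add: X_def)
    from H have "X * (of_nat (Suc k) * (a * Tf l (Suc k))) = X * (a * pderiv (Tf l k) + b * Tf l k)"
      by (simp add: algebra_simps)
    then show ?thesis using X0 by simp
  qed
  have T0: "Tf l 0 = a ^ n * monom 1 l" for l
    by (simp add: Tf_def Tl_0 aA[symmetric] Efac_def monom_altdef mult.commute)
  have PP: "Ppoly a b n l = Tf l n" for l
  proof -
    have "Qop a b (a ^ n * monom 1 l) n = smult (fact n) (a ^ n * Tf l n)"
      using Qop_closed[of n a "Tf l" b "a ^ n * monom 1 l" n] stepT[of _ l] T0[of l] by blast
    then show ?thesis using a0 by (simp add: Ppoly_def div_smult_left)
  qed
  define M where "M = Mb absv s \<alpha> n"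
  define Mt where "Mt = prod_list (map M xs)"
  have Mt1: "1 \<le> Mt" unfolding Mt_def
    by (rule prod_list_ge1) (auto simp: M_def intro: Mb_ge1[OF v])
  have cbT: "cb absv (Tf l n) Mt" for l
    unfolding Tf_def
  proof (rule cb_sum[OF v])
    fix j assume "j \<in> {..n}"
    then have j: "n - j \<le> n" by simp
    have e: "cb absv (Efac 0 0 l j) 1"
    proof -
      have c1: "cb absv ([:-0, 1:] ^ (l - j)) (max 1 (absv 0) ^ (l - j))"
        by (rule cb_power[OF v cb_lin[OF v]]) simp
      have g: "absv ((0 + of_nat l) gchoose j) \<le> 1"
        using av_of_nat[OF v, of "l choose j"] by (simp add: binomial_gbinomial)
      show ?thesis using cb_smult[OF v c1 g] by (simp add: Efac_def av_0[OF v])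
    qed
    have t: "cb absv (Tl \<sigma> \<alpha> n xs (n - j)) Mt"
      unfolding Mt_def M_def \<sigma>_def by (rule Tl_cb[OF v j])
    show "cb absv (Efac 0 0 l j * Tl \<sigma> \<alpha> n xs (n - j)) Mt"
      using cb_mult[OF v e t] Mt1 by simp
  qed (use Mt1 in simp)
  have vn: "vnorm absv (Ppoly a b n l) \<le> Mt \<and> 0 \<le> vnorm absv (Ppoly a b n l)" for l
  proof -
    have fin: "finite ((\<lambda>k. absv (coeff (Ppoly a b n l) k)) ` {0..degree (Ppoly a b n l)})" by simp
    have ne: "(\<lambda>k. absv (coeff (Ppoly a b n l) k)) ` {0..degree (Ppoly a b n l)} \<noteq> {}" by simp
    have "vnorm absv (Ppoly a b n l) \<le> Mt"
      unfolding vnorm_def using cbT[of l] by (simp add: Max_le_iff[OF fin ne] PP cb_def[OF v])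
    moreover have "absv (coeff (Ppoly a b n l) 0) \<le> vnorm absv (Ppoly a b n l)"
      unfolding vnorm_def by (rule Max_ge[OF fin]) auto
    ultimately show ?thesis using av_nonneg[OF v, of "coeff (Ppoly a b n l) 0"] by linarith
  qed
  define Mx where "Mx = Max ((\<lambda>l. vnorm absv (Ppoly a b n l)) ` {0..m})"
  have Mx: "Mx \<le> Mt" "0 \<le> Mx"
  proof -
    have fin: "finite ((\<lambda>l. vnorm absv (Ppoly a b n l)) ` {0..m})" by simp
    have ne: "(\<lambda>l. vnorm absv (Ppoly a b n l)) ` {0..m} \<noteq> {}" by simp
    show "Mx \<le> Mt" unfolding Mx_def using vn by (simp add: Max_le_iff[OF fin ne])
    have "vnorm absv (Ppoly a b n 0) \<le> Mx" unfolding Mx_def by (rule Max_ge[OF fin]) auto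
    then show "0 \<le> Mx" using vn[of 0] by linarith
  qed
  have lnMx: "ln Mx \<le> ln Mt"
  proof (cases "Mx = 0")
    case True then show ?thesis using Mt1 by simp
  next
    case False then show ?thesis using Mx by simp
  qed
  have MtP: "Mt = (\<Prod>i<m. M i)" unfolding Mt_def xs_def
    by (induction m) simp_all
  have Mpos: "0 < M i" for i using Mb_ge1[OF v, of s \<alpha> n i] by (simp add: M_def)
  have "ln Mt = (\<Sum>i<m. ln (M i))" unfolding MtP using Mpos by (intro ln_prod) (auto simp: less_le)
  also have "\<dots> = (\<Sum>i<m. - ln (absv (of_nat (mu n (s i)))) + real n * hv absv (\<alpha> i))"
  proof (rule sum.cong[OF refl])
    fix i
    have p1: "0 < absv (of_nat (mu n (s i)))" using av_mu(1)[OF v] .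
    have p2: "0 < max 1 (absv (\<alpha> i)) ^ n" by simp
    show "ln (M i) = - ln (absv (of_nat (mu n (s i)))) + real n * hv absv (\<alpha> i)"
      unfolding M_def Mb_def[OF v] hv_def using p1 p2
      by (simp add: ln_mult ln_div ln_realpow)
  qed
  finally show ?thesis using lnMx unfolding Mx_def by simp
qed

end
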